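(* Let $X$ be a nonempty discrete (finite or countable) set, $p^*$ a probability distribution on $X$, $X^{\checkmark}=\{x\in X:p^*(x)>0\}$, and let $x_1,\dots,x_N\in X^{\checkmark}$ ($N\ge1$) with dataset $\mathcal{X}=\{x_1,\dots,x_N\}$ and $q(x)=\frac1N\#\{i:x_i=x\}$. Let $F$ be a set of probability distributions on $X$, and for $x\in X$ let $C(x)=\{x'\in X:\ f(x')=f(x)\text{ for all } f\in F\}$. Suppose (i) $F$ generalizes from $\mathcal{X}$ to $X^{\checkmark}$, i.e., $\{C(x):x\in\mathcal{X}\}=\{C(x):x\in X^{\checkmark}\}$; (ii) $p^*\in F$; (iii) no two distinct data points of $\mathcal{X}$ lie in the same class, i.e., $C(x)\ne C(x')$ for distinct $x,x'\in\mathcal{X}$. Then every maximizer $\hat p^*_F$ of $\mathbb{E}_{q(x)}[\log p(x)]=\frac1N\sum_i\log p(x_i)$ over $p\in F$ is complete: $\hat p^*_F(x)>0$ for all $x\in X^{\checkmark}$.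
   Context: A probability distribution on $X$ is $p:X\to[0,\infty)$ with $\sum_x p(x)=1$; $\log 0=-\infty$. A distribution is complete if it assigns positive mass to every valid point $x\in X^{\checkmark}$. *)

theory Defs
  imports "HOL-Analysis.Analysis" "HOL-Library.Extended_Real"
begin

text \<open>The discrete set X is the (countable, nonempty) type 'a.\<close>

definition is_distr :: "('a \<Rightarrow> real) \<Rightarrow> bool" where
  "is_distr p \<longleftrightarrow> (\<forall>x. p x \<ge> 0) \<and> (p has_sum 1) UNIV"

definition valid_pts :: "('a \<Rightarrow> real) \<Rightarrow> 'a set" where
  "valid_pts pstar = {x. pstar x > 0}"

definition elog :: "real \<Rightarrow> ereal" where
  "elog t = (if t = 0 then -\<infinity> else ereal (ln t))"

definition cls :: "('a \<Rightarrow> real) set \<Rightarrow> 'a \<Rightarrow> 'a set" where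
  "cls F x = {x'. \<forall>f\<in>F. f x' = f x}"

definition loglik :: "nat \<Rightarrow> (nat \<Rightarrow> 'a) \<Rightarrow> ('a \<Rightarrow> real) \<Rightarrow> ereal" where
  "loglik N xs p = ereal (1 / real N) * (\<Sum>i<N. elog (p (xs i)))"

definition complete_distr :: "('a \<Rightarrow> real) \<Rightarrow> ('a \<Rightarrow> real) \<Rightarrow> bool" where
  "complete_distr pstar p \<longleftrightarrow> (\<forall>x\<in>valid_pts pstar. p x > 0)"

end

theory Submission
  imports Defs
begin

lemma elog_not_inf: "elog t \<noteq> \<infinity>"
  by (simp add: elog_def)

lemma sum_elog_minf:
  assumes "j < (N::nat)" "elog (g j) = -\<infinity>"
  shows "(\<Sum>i<N. elog (g i)) = -\<infinity>"
proof -
  have "(\<Sum>i<N. elog (g i)) = elog (g j) + (\<Sum>i\<in>{..<N}-{j}. elog (g i))"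
    using assms(1) by (subst sum.remove[of _ j]) auto
  moreover have "(\<Sum>i\<in>{..<N}-{j}. elog (g i)) \<noteq> \<infinity>"
    by (simp add: sum_Pinfty elog_not_inf)
  ultimately show ?thesis using assms(2) by simp
qed

theorem mainTheorem7:
  fixes pstar :: "'a::countable \<Rightarrow> real"
    and F :: "('a \<Rightarrow> real) set"
    and N :: nat and xs :: "nat \<Rightarrow> 'a"
    and phat :: "'a \<Rightarrow> real"
  assumes "is_distr pstar"
    and "N \<ge> 1"
    and "\<forall>i<N. xs i \<in> valid_pts pstar"
    and "\<forall>f\<in>F. is_distr f"
    and "cls F ` (xs ` {..<N}) = cls F ` valid_pts pstar"
    and "pstar \<in> F"
    and "\<forall>x\<in>xs ` {..<N}. \<forall>x'\<in>xs ` {..<N}. x \<noteq> x' \<longrightarrow> cls F x \<noteq> cls F x'"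
    and "phat \<in> F"
    and "\<forall>p\<in>F. loglik N xs p \<le> loglik N xs phat"
  shows "complete_distr pstar phat"
proof -
  have Npos: "(1 / real N) > 0" using assms(2) by simp
  have "(\<Sum>i<N. elog (pstar (xs i))) = (\<Sum>i<N. ereal (ln (pstar (xs i))))"
    using assms(3) by (intro sum.cong) (auto simp: elog_def valid_pts_def)
  also have "\<dots> = ereal (\<Sum>i<N. ln (pstar (xs i)))" by simp
  finally have fin: "loglik N xs pstar = ereal (1 / real N * (\<Sum>i<N. ln (pstar (xs i))))"
    by (simp add: loglik_def)
  have le: "loglik N xs pstar \<le> loglik N xs phat" using assms(6,9) by blast
  have pos: "phat (xs j) > 0" if j: "j < N" for j
  proof (rule ccontr)
    assume "\<not> phat (xs j) > 0"
    moreover have "phat (xs j) \<ge> 0" using assms(4,8) by (auto simp: is_distr_def)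
    ultimately have "phat (xs j) = 0" by simp
    hence "elog (phat (xs j)) = -\<infinity>" by (simp add: elog_def)
    hence "(\<Sum>i<N. elog (phat (xs i))) = -\<infinity>" using sum_elog_minf[OF j, of "\<lambda>i. phat (xs i)"] by simp
    hence "loglik N xs phat = -\<infinity>" using Npos by (simp add: loglik_def)
    with le fin show False by simp
  qed
  show ?thesis unfolding complete_distr_def
  proof
    fix x assume x: "x \<in> valid_pts pstar"
    then obtain y where y: "y \<in> xs ` {..<N}" and c: "cls F y = cls F x"
      using assms(5) by (metis imageE imageI)
    have "x \<in> cls F x" by (simp add: cls_def)
    hence "x \<in> cls F y" using c by simp
    hence "phat x = phat y" using assms(8) by (simp add: cls_def)
    moreover from y obtain j where "j < N" "y = xs j" by auto
    ultimately show "phat x > 0" using pos by simp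
  qed
qed

end
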